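(* In the odd setting below, define recursively, for all $k\in\mathbb Z$ and $\ell\ge0$, block columns $G^{(k)}_{2\ell}$, $\hat G^{(k)}_{2\ell+1}$ and $n\times n$ matrices $\alpha_i^j(k)$ by $G^{(k)}_0=r_k$, $\hat G^{(k)}_{2\ell+1}=p_k(G^{(k+1)}_{2\ell})_{\mathrm{last}}+\Gamma G^{(k+1)}_{2\ell}$, $G^{(k)}_{2\ell+2}=\Gamma\hat G^{(k+1)}_{2\ell+1}$, $\alpha_0^{2\ell+1}(k)=(G^{(k+1)}_{2\ell})_{\mathrm{last}}$, $\alpha_{2r}^{2\ell+1}(k)=\alpha_{2r-1}^{2\ell}(k+1)$ ($1\le r\le\ell$), $\alpha_{2r+1}^{2\ell+2}(k)=\alpha_{2r}^{2\ell+1}(k+1)$ ($0\le r\le\ell$). Then for all $k$ and $\ell\ge0$, $$F^{(k)}_{2\ell}=\sum_{r=1}^{\ell}F^{(k)}_{2r-1}\alpha_{2r-1}^{2\ell}(k)+G^{(k)}_{2\ell},\qquad F^{(k)}_{2\ell+1}=\sum_{r=0}^{\ell}F^{(k)}_{2r}\alpha_{2r}^{2\ell+1}(k)+\hat G^{(k)}_{2\ell+1}.$$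
   Context: Odd setting: integers $n\ge1$, $s\ge1$, $m=2s+1$. For each $k\in\mathbb Z$ let $a_k^0,\dots,a_k^{2s}$ be $n\times n$ matrices, $N$-periodic in $k$. $Q_k$ is the $mn\times mn$ block matrix with $I_n$ in blocks $(i+1,i)$, $i=1,\dots,m-1$, last block column $(a_k^0;a_k^1;\dots;a_k^{2s})$, $O_n$ elsewhere. $r_k=(a_k^0;O_n;a_k^2;O_n;\dots;O_n;a_k^{2s})$ and $p_k=(O_n;a_k^1;O_n;a_k^3;\dots;a_k^{2s-1};O_n)$ (so the last block column of $Q_k$ is $p_k+r_k$). $\Gamma$ is the $mn\times mn$ block matrix with $I_n$ in blocks $(i+1,i)$ and $O_n$ elsewhere. $F^{(k)}_0=r_k$, $F^{(k)}_\ell=Q_kQ_{k+1}\cdots Q_{k+\ell-1}r_{k+\ell}$ for $\ell\ge1$. $(A)_{\mathrm{last}}$ is the last $n\times n$ block of a block column $A$. *)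

theory Defs
  imports "Jordan_Normal_Form.Matrix"
begin

text \<open>Odd setting: m = 2s+1, block size n. The coefficient matrices are
  a k j (k an integer, j = 0..2s), each an n x n matrix.
  All block matrices are ordinary (m n) x (m n) resp. (m n) x n matrices,
  with block indices 0-based: row i lies in block row i div n.\<close>

definition mdim :: "nat \<Rightarrow> nat \<Rightarrow> nat" where
  "mdim n s = (2*s+1) * n"

definition Qmat :: "nat \<Rightarrow> nat \<Rightarrow> (int \<Rightarrow> nat \<Rightarrow> 'a::comm_ring_1 mat) \<Rightarrow> int \<Rightarrow> 'a mat" where
  "Qmat n s a k = mat (mdim n s) (mdim n s) (\<lambda>(i,j).
     if j div n = 2*s then a k (i div n) $$ (i mod n, j mod n)
     else if i div n = j div n + 1 \<and> i mod n = j mod n then 1 else 0)"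

definition Gammat :: "nat \<Rightarrow> nat \<Rightarrow> 'a::comm_ring_1 mat" where
  "Gammat n s = mat (mdim n s) (mdim n s) (\<lambda>(i,j).
     if i div n = j div n + 1 \<and> i mod n = j mod n then 1 else 0)"

definition rcol :: "nat \<Rightarrow> nat \<Rightarrow> (int \<Rightarrow> nat \<Rightarrow> 'a::comm_ring_1 mat) \<Rightarrow> int \<Rightarrow> 'a mat" where
  "rcol n s a k = mat (mdim n s) n (\<lambda>(i,j).
     if even (i div n) then a k (i div n) $$ (i mod n, j) else 0)"

definition pcol :: "nat \<Rightarrow> nat \<Rightarrow> (int \<Rightarrow> nat \<Rightarrow> 'a::comm_ring_1 mat) \<Rightarrow> int \<Rightarrow> 'a mat" where
  "pcol n s a k = mat (mdim n s) n (\<lambda>(i,j).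
     if odd (i div n) then a k (i div n) $$ (i mod n, j) else 0)"

definition lastblk :: "nat \<Rightarrow> nat \<Rightarrow> 'a mat \<Rightarrow> 'a mat" where
  "lastblk n s A = mat n n (\<lambda>(i,j). A $$ (2*s*n + i, j))"

fun Qprod :: "nat \<Rightarrow> nat \<Rightarrow> (int \<Rightarrow> nat \<Rightarrow> 'a::comm_ring_1 mat) \<Rightarrow> int \<Rightarrow> nat \<Rightarrow> 'a mat" where
  "Qprod n s a k 0 = 1\<^sub>m (mdim n s)"
| "Qprod n s a k (Suc l) = Qmat n s a k * Qprod n s a (k+1) l"

definition Fcol :: "nat \<Rightarrow> nat \<Rightarrow> (int \<Rightarrow> nat \<Rightarrow> 'a::comm_ring_1 mat) \<Rightarrow> int \<Rightarrow> nat \<Rightarrow> 'a mat" where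
  "Fcol n s a k l = Qprod n s a k l * rcol n s a (k + int l)"

text \<open>Gcol k (2l) = G^{(k)}_{2l},  Gcol k (2l+1) = hat G^{(k)}_{2l+1}.\<close>
fun Gcol :: "nat \<Rightarrow> nat \<Rightarrow> (int \<Rightarrow> nat \<Rightarrow> 'a::comm_ring_1 mat) \<Rightarrow> int \<Rightarrow> nat \<Rightarrow> 'a mat" where
  "Gcol n s a k 0 = rcol n s a k"
| "Gcol n s a k (Suc j) =
     (if even j
      then pcol n s a k * lastblk n s (Gcol n s a (k+1) j) + Gammat n s * Gcol n s a (k+1) j
      else Gammat n s * Gcol n s a (k+1) j)"

text \<open>alpha k j i = alpha_i^j(k): alpha_0^{j+1}(k) = (G^{(k+1)}_j)_last (used for j even),
  alpha_{i+1}^{j+1}(k) = alpha_i^j(k+1).\<close>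
fun alpha :: "nat \<Rightarrow> nat \<Rightarrow> (int \<Rightarrow> nat \<Rightarrow> 'a::comm_ring_1 mat) \<Rightarrow> int \<Rightarrow> nat \<Rightarrow> nat \<Rightarrow> 'a mat" where
  "alpha n s a k 0 i = 0\<^sub>m n n"
| "alpha n s a k (Suc j) 0 = lastblk n s (Gcol n s a (k+1) j)"
| "alpha n s a k (Suc j) (Suc i) = alpha n s a (k+1) j i"

definition msum :: "nat \<Rightarrow> nat \<Rightarrow> ('b \<Rightarrow> 'a::comm_monoid_add mat) \<Rightarrow> 'b set \<Rightarrow> 'a mat" where
  "msum nr nc f I = mat nr nc (\<lambda>ij. \<Sum>x\<in>I. f x $$ ij)"

end

theory Submission imports Defs begin

lemma msum_carrier[simp]: "msum nr nc f I \<in> carrier_mat nr nc"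
  by (simp add: msum_def)

lemma msum_empty: "msum nr nc f {} = 0\<^sub>m nr nc"
  by (auto simp: msum_def)

lemma msum_insert:
  assumes "finite I" "x \<notin> I" "f x \<in> carrier_mat nr nc"
  shows "msum nr nc f (insert x I) = f x + msum nr nc f I"
  using assms by (intro eq_matI) (auto simp: msum_def)

lemma msum_cong: "(\<And>x. x \<in> I \<Longrightarrow> f x = g x) \<Longrightarrow> msum nr nc f I = msum nr nc g I"
  unfolding msum_def by (intro cong_mat refl sum.cong) auto

lemma msum_reindex: "inj_on h I \<Longrightarrow> msum nr nc f (h ` I) = msum nr nc (f \<circ> h) I"
  unfolding msum_def by (simp add: sum.reindex)

lemma mult_msum:
  assumes "M \<in> carrier_mat nr m" "\<And>x. x \<in> I \<Longrightarrow> f x \<in> carrier_mat m nc"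
  shows "M * msum m nc f I = msum nr nc (\<lambda>x. M * f x) I"
proof (rule eq_matI)
  fix i j assume ij: "i < dim_row (msum nr nc (\<lambda>x. M * f x) I)" "j < dim_col (msum nr nc (\<lambda>x. M * f x) I)"
  hence i: "i < nr" and j: "j < nc" by (auto simp: msum_def)
  have "(M * msum m nc f I) $$ (i,j) = (\<Sum>t<m. M $$ (i,t) * (\<Sum>x\<in>I. f x $$ (t,j)))"
    using assms i j by (simp add: scalar_prod_def msum_def atLeast0LessThan)
  also have "\<dots> = (\<Sum>x\<in>I. \<Sum>t<m. M $$ (i,t) * f x $$ (t,j))"
    by (simp add: sum_distrib_left sum.swap[of _ I])
  also have "\<dots> = msum nr nc (\<lambda>x. M * f x) I $$ (i,j)"
    unfolding msum_def
  proof (subst index_mat(1), (simp_all add: i j)[2], intro sum.cong refl)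
    fix x assume "x \<in> I"
    with assms(2) have fx: "f x \<in> carrier_mat m nc" by auto
    show "(\<Sum>t<m. M $$ (i,t) * f x $$ (t,j)) = (M * f x) $$ (i,j)"
      using assms(1) fx i j by (simp add: scalar_prod_def atLeast0LessThan)
  qed
  finally show "(M * msum m nc f I) $$ (i,j) = msum nr nc (\<lambda>x. M * f x) I $$ (i,j)" .
qed (use assms in \<open>auto simp: msum_def\<close>)


lemma div_le_2s: "i < mdim n s \<Longrightarrow> i div n \<le> 2*s"
  unfolding mdim_def by (metis less_Suc_eq_le less_mult_imp_div_less mult.commute Suc_eq_plus1 add.commute)

lemma carriers[simp]:
  "Qmat n s a k \<in> carrier_mat (mdim n s) (mdim n s)"
  "Gammat n s \<in> carrier_mat (mdim n s) (mdim n s)"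
  "rcol n s a k \<in> carrier_mat (mdim n s) n"
  "pcol n s a k \<in> carrier_mat (mdim n s) n"
  "lastblk n s X \<in> carrier_mat n n"
  by (auto simp: Qmat_def Gammat_def rcol_def pcol_def lastblk_def)

lemma dims[simp]:
  "dim_row (Qmat n s a k) = mdim n s" "dim_col (Qmat n s a k) = mdim n s"
  "dim_row (Gammat n s) = mdim n s" "dim_col (Gammat n s) = mdim n s"
  "dim_row (rcol n s a k) = mdim n s" "dim_col (rcol n s a k) = n"
  "dim_row (pcol n s a k) = mdim n s" "dim_col (pcol n s a k) = n"
  "dim_row (lastblk n s X) = n" "dim_col (lastblk n s X) = n"
  by (auto simp: Qmat_def Gammat_def rcol_def pcol_def lastblk_def)

lemma Gam_mult_car[simp]: "X \<in> carrier_mat (mdim n s) c \<Longrightarrow> Gammat n s * X \<in> carrier_mat (mdim n s) c"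
  by (rule mult_carrier_mat[OF carriers(2)])

lemma pcol_mult_car[simp]: "Y \<in> carrier_mat n c \<Longrightarrow> pcol n s a k * Y \<in> carrier_mat (mdim n s) c"
  by (rule mult_carrier_mat[OF carriers(4)])

lemma Qprod_carrier[simp]: "Qprod n s a k l \<in> carrier_mat (mdim n s) (mdim n s)"
proof (induction l arbitrary: k)
  case (Suc l) show ?case using mult_carrier_mat[OF carriers(1) Suc[of "k+1"]] by simp
qed simp

lemma Fcol_carrier[simp]: "Fcol n s a k l \<in> carrier_mat (mdim n s) n"
  unfolding Fcol_def by (rule mult_carrier_mat[OF Qprod_carrier carriers(3)])

lemma Gcol_carrier[simp]: "Gcol n s a k l \<in> carrier_mat (mdim n s) n"
proof (induction l arbitrary: k)
  case (Suc l)
  have a: "Gammat n s * Gcol n s a (k+1) l \<in> carrier_mat (mdim n s) n"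
    by (rule mult_carrier_mat[OF carriers(2) Suc[of "k+1"]])
  have b: "pcol n s a k * lastblk n s (Gcol n s a (k+1) l) \<in> carrier_mat (mdim n s) n"
    by (rule mult_carrier_mat[OF carriers(4) carriers(5)])
  show ?case using a b by (simp add: add_carrier_mat)
qed simp

lemma alpha_carrier[simp]: "alpha n s a k j i \<in> carrier_mat n n"
proof (induction j arbitrary: k i)
  case (Suc j) thus ?case by (cases i) auto
qed simp

lemma Fcol_Suc: "Fcol n s a k (Suc l) = Qmat n s a k * Fcol n s a (k+1) l"
  unfolding Fcol_def by (simp add: algebra_simps assoc_mult_mat[OF carriers(1) Qprod_carrier carriers(3)])

lemma Fcol_0: "Fcol n s a k 0 = rcol n s a k"
  unfolding Fcol_def using left_mult_one_mat[OF carriers(3)] by simp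

definition zeroOn :: "nat \<Rightarrow> nat \<Rightarrow> 'a::comm_ring_1 mat \<Rightarrow> bool \<Rightarrow> bool" where
  "zeroOn n s X b = (\<forall>i j. i < mdim n s \<longrightarrow> j < n \<longrightarrow> even (i div n) = b \<longrightarrow> X $$ (i,j) = 0)"

lemma zeroOn_r: "zeroOn n s (rcol n s a k) False"
  by (auto simp: zeroOn_def rcol_def)

lemma zeroOn_add: "X \<in> carrier_mat (mdim n s) n \<Longrightarrow> Y \<in> carrier_mat (mdim n s) n \<Longrightarrow>
   zeroOn n s X b \<Longrightarrow> zeroOn n s Y b \<Longrightarrow> zeroOn n s (X + Y) b"
  by (auto simp: zeroOn_def)

lemma zeroOn_p: "Y \<in> carrier_mat n n \<Longrightarrow> zeroOn n s (pcol n s a k * Y) True"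
  unfolding zeroOn_def
  by (auto simp: scalar_prod_def pcol_def intro!: sum.neutral)

lemma zeroOn_Gamma: assumes "X \<in> carrier_mat (mdim n s) n" "zeroOn n s X b"
  shows "zeroOn n s (Gammat n s * X) (\<not> b)"
  unfolding zeroOn_def
proof (intro allI impI)
  fix i j assume i: "i < mdim n s" and j: "j < n" and e: "even (i div n) = (\<not> b)"
  have "(Gammat n s * X) $$ (i,j) = (\<Sum>t\<in>{0..<mdim n s}. Gammat n s $$ (i,t) * X $$ (t,j))"
    using assms i j by (simp add: scalar_prod_def)
  also have "\<dots> = 0"
  proof (intro sum.neutral ballI)
    fix t assume t: "t \<in> {0..<mdim n s}"
    show "Gammat n s $$ (i,t) * X $$ (t,j) = 0"
    proof (cases "i div n = t div n + 1 \<and> i mod n = t mod n")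
      case True
      hence "even (t div n) = b" using e by auto
      thus ?thesis using assms(2) t j unfolding zeroOn_def by auto
    next
      case False thus ?thesis using i t by (auto simp: Gammat_def)
    qed
  qed
  finally show "(Gammat n s * X) $$ (i,j) = 0" .
qed

lemma zeroOn_last: assumes "zeroOn n s X True" shows "lastblk n s X = 0\<^sub>m n n"
proof (rule eq_matI)
  fix i j assume "i < dim_row (0\<^sub>m n n :: 'a mat)" "j < dim_col (0\<^sub>m n n :: 'a mat)"
  hence i: "i < n" and j: "j < n" by auto
  have "2*s*n + i < mdim n s" using i by (simp add: mdim_def algebra_simps)
  moreover have "(2*s*n + i) div n = 2*s" using i by simp
  ultimately show "lastblk n s X $$ (i,j) = 0\<^sub>m n n $$ (i,j)"
    using assms i j by (simp add: zeroOn_def lastblk_def)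
qed (auto simp: lastblk_def)

lemma Gcol_zeroOn: "zeroOn n s (Gcol n s a k (2*l)) False \<and> zeroOn n s (Gcol n s a k (2*l+1)) True"
proof (induction l arbitrary: k)
  case 0
  have "zeroOn n s (Gammat n s * rcol n s a (k+1)) True"
    using zeroOn_Gamma[OF carriers(3) zeroOn_r] by simp
  hence "zeroOn n s (pcol n s a k * lastblk n s (rcol n s a (k+1)) + Gammat n s * rcol n s a (k+1)) True"
    by (intro zeroOn_add zeroOn_p) auto
  thus ?case using zeroOn_r by simp
next
  case (Suc l)
  have G2: "Gcol n s a k (2*Suc l) = Gammat n s * Gcol n s a (k+1) (2*l+1)"
  proof -
    have e: "2*Suc l = Suc (2*l+1)" by simp
    have o: "\<not> even (2*l+1)" by simp
    show ?thesis unfolding e Gcol.simps(2)[of n s a k "2*l+1"] by (simp only: if_not_P[OF o])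
  qed
  have G3: "Gcol n s a k (2*Suc l+1) = pcol n s a k * lastblk n s (Gcol n s a (k+1) (2*Suc l))
     + Gammat n s * Gcol n s a (k+1) (2*Suc l)"
  proof -
    have e: "2*Suc l + 1 = Suc (2*Suc l)" by simp
    have o: "even (2*Suc l)" by simp
    show ?thesis unfolding e Gcol.simps(2)[of n s a k "2*Suc l"] by (simp only: if_P[OF o])
  qed
  have z2: "\<And>k. zeroOn n s (Gcol n s a k (2*Suc l)) False"
  proof -
    fix k
    have "zeroOn n s (Gammat n s * Gcol n s a (k+1) (2*l+1)) (\<not> True)"
      by (rule zeroOn_Gamma[OF Gcol_carrier]) (use Suc in blast)
    thus "zeroOn n s (Gcol n s a k (2*Suc l)) False" unfolding G2 by simp
  qed
  have z3: "zeroOn n s (Gcol n s a k (2*Suc l+1)) True"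
    unfolding G3
  proof (rule zeroOn_add)
    show "zeroOn n s (Gammat n s * Gcol n s a (k+1) (2*Suc l)) True"
      using zeroOn_Gamma[OF Gcol_carrier z2[of "k+1"]] by (simp only: not_False_eq_True)
  qed (auto intro: zeroOn_p)
  show ?case using z2 z3 by blast
qed


lemma block_range: assumes "0 < n" shows
  "{t \<in> {0..<mdim n s}. t div n = 2*s} = (\<lambda>u. 2*s*n + u) ` {0..<n}"
proof (rule equalityI; rule subsetI)
  fix t assume "t \<in> {t \<in> {0..<mdim n s}. t div n = 2*s}"
  hence "t div n = 2*s" by auto
  hence "t = 2*s*n + t mod n" by (metis div_mult_mod_eq)
  thus "t \<in> (\<lambda>u. 2*s*n + u) ` {0..<n}" using assms by (metis atLeastLessThan_iff image_eqI mod_less_divisor zero_le)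
next
  fix t assume "t \<in> (\<lambda>u. 2*s*n + u) ` {0..<n}"
  then obtain u where u: "u < n" "t = 2*s*n + u" by (meson atLeastLessThan_iff imageE)
  thus "t \<in> {t \<in> {0..<mdim n s}. t div n = 2*s}" by (auto simp: mdim_def algebra_simps)
qed

lemma Q_mult: assumes X: "X \<in> carrier_mat (mdim n s) n"
  shows "Qmat n s a k * X = Gammat n s * X + (pcol n s a k + rcol n s a k) * lastblk n s X"
proof (rule eq_matI)
  fix i j assume "i < dim_row (Gammat n s * X + (pcol n s a k + rcol n s a k) * lastblk n s X)"
    "j < dim_col (Gammat n s * X + (pcol n s a k + rcol n s a k) * lastblk n s X)"
  hence i: "i < mdim n s" and j: "j < n" using X by auto
  hence n0: "0 < n" by auto
  define A where "A u = a k (i div n) $$ (i mod n, u)" for u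
  have idiv: "i div n \<le> 2*s" using div_le_2s i .
  have Qe: "Qmat n s a k $$ (i,t) = Gammat n s $$ (i,t) + (if t div n = 2*s then A (t mod n) else 0)"
    if t: "t < mdim n s" for t
    using i t idiv by (auto simp: Qmat_def Gammat_def A_def)
  have "(Qmat n s a k * X) $$ (i,j) = (\<Sum>t\<in>{0..<mdim n s}. Qmat n s a k $$ (i,t) * X $$ (t,j))"
    using i j X by (simp add: scalar_prod_def)
  also have "\<dots> = (\<Sum>t\<in>{0..<mdim n s}. Gammat n s $$ (i,t) * X $$ (t,j))
      + (\<Sum>t\<in>{0..<mdim n s}. if t div n = 2*s then A (t mod n) * X $$ (t,j) else 0)"
    by (subst sum.distrib[symmetric]) (rule sum.cong[OF refl], auto simp: Qe distrib_right)
  also have "(\<Sum>t\<in>{0..<mdim n s}. if t div n = 2*s then A (t mod n) * X $$ (t,j) else 0)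
     = (\<Sum>t\<in>{t \<in> {0..<mdim n s}. t div n = 2*s}. A (t mod n) * X $$ (t,j))"
    by (rule sum.inter_filter[symmetric]) simp
  also have "\<dots> = (\<Sum>u\<in>{0..<n}. A u * X $$ (2*s*n + u, j))"
    unfolding block_range[OF n0] by (subst sum.reindex) (auto simp: inj_on_def)
  also have "\<dots> = ((pcol n s a k + rcol n s a k) * lastblk n s X) $$ (i,j)"
    using i j by (auto simp: scalar_prod_def A_def pcol_def rcol_def lastblk_def intro!: sum.cong)
  also have "(\<Sum>t\<in>{0..<mdim n s}. Gammat n s $$ (i,t) * X $$ (t,j)) = (Gammat n s * X) $$ (i,j)"
    using i j X by (simp add: scalar_prod_def)
  finally show "(Qmat n s a k * X) $$ (i,j) = (Gammat n s * X + (pcol n s a k + rcol n s a k) * lastblk n s X) $$ (i,j)"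
    using i j X by simp
qed (use X in auto)


declare Gcol.simps(2)[simp del]

lemma add4: fixes A :: "'a::comm_ring_1 mat"
  assumes "A \<in> carrier_mat nr nc" "B \<in> carrier_mat nr nc" "C \<in> carrier_mat nr nc" "D \<in> carrier_mat nr nc"
  shows "A + (B + (C + D)) = (D + A) + (C + B)"
proof (rule eq_matI)
  fix i j assume "i < dim_row (D + A + (C + B))" "j < dim_col (D + A + (C + B))"
  with assms have "i < nr" "j < nc" by auto
  with assms show "(A + (B + (C + D))) $$ (i, j) = (D + A + (C + B)) $$ (i, j)"
    by (simp add: algebra_simps)
qed (use assms in auto)

lemma Gcol_evenS: "Gcol n s a k (Suc (2*l)) =
   pcol n s a k * lastblk n s (Gcol n s a (k+1) (2*l)) + Gammat n s * Gcol n s a (k+1) (2*l)"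
proof -
  have o: "even (2*l)" by simp
  show ?thesis unfolding Gcol.simps(2)[of n s a k "2*l"] by (simp only: if_P[OF o])
qed

lemma Gcol_oddS: "Gcol n s a k (Suc (2*l+1)) = Gammat n s * Gcol n s a (k+1) (2*l+1)"
proof -
  have o: "\<not> even (2*l+1)" by simp
  show ?thesis unfolding Gcol.simps(2)[of n s a k "2*l+1"] by (simp only: if_not_P[OF o])
qed

lemma Q_F_alpha: "Qmat n s a k * (Fcol n s a (k+1) i * alpha n s a (k+1) j i)
   = Fcol n s a k (Suc i) * alpha n s a k (Suc j) (Suc i)"
  by (simp add: Fcol_Suc assoc_mult_mat[OF carriers(1) Fcol_carrier alpha_carrier, symmetric])

lemma step_odd:
  assumes IH: "Fcol n s a (k+1) (2*l) =
           msum (mdim n s) n (\<lambda>r. Fcol n s a (k+1) (2*r-1) * alpha n s a (k+1) (2*l) (2*r-1)) {1..l}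
           + Gcol n s a (k+1) (2*l)"
  shows "Fcol n s a k (2*l+1) =
           msum (mdim n s) n (\<lambda>r. Fcol n s a k (2*r) * alpha n s a k (2*l+1) (2*r)) {0..l}
           + Gcol n s a k (2*l+1)"
proof -
  let ?Q = "Qmat n s a k" and ?M = "mdim n s"
  let ?S = "msum ?M n (\<lambda>r. Fcol n s a (k+1) (2*r-1) * alpha n s a (k+1) (2*l) (2*r-1)) {1..l}"
  let ?S' = "msum ?M n (\<lambda>r. Fcol n s a k (2*r) * alpha n s a k (2*l+1) (2*r)) {1..l}"
  let ?G = "Gcol n s a (k+1) (2*l)"
  let ?L = "lastblk n s ?G"
  have "Fcol n s a k (2*l+1) = ?Q * (?S + ?G)"
    unfolding Suc_eq_plus1[symmetric] Fcol_Suc IH by (rule refl)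
  also have "\<dots> = ?Q * ?S + ?Q * ?G"
    by (rule mult_add_distrib_mat[OF carriers(1) msum_carrier Gcol_carrier])
  also have "?Q * ?S = ?S'"
  proof -
    have "?Q * ?S = msum ?M n (\<lambda>r. ?Q * (Fcol n s a (k+1) (2*r-1) * alpha n s a (k+1) (2*l) (2*r-1))) {1..l}"
      by (rule mult_msum[OF carriers(1)]) (simp add: mult_carrier_mat[OF Fcol_carrier alpha_carrier])
    also have "\<dots> = ?S'"
    proof (rule msum_cong)
      fix r assume "r \<in> {1..l}"
      hence x: "Suc (2*r-1) = 2*r" by auto
      have y: "Suc (2*l) = 2*l+1" by simp
      show "?Q * (Fcol n s a (k+1) (2*r-1) * alpha n s a (k+1) (2*l) (2*r-1))
          = Fcol n s a k (2*r) * alpha n s a k (2*l+1) (2*r)"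
        using Q_F_alpha[of n s a k "2*r-1" "2*l"] unfolding x y .
    qed
    finally show ?thesis .
  qed
  also have "?Q * ?G = Gammat n s * ?G + (pcol n s a k + rcol n s a k) * ?L"
    by (rule Q_mult[OF Gcol_carrier])
  finally have ch: "Fcol n s a k (2*l+1) = ?S' + (Gammat n s * ?G + (pcol n s a k + rcol n s a k) * ?L)" .
  have "msum ?M n (\<lambda>r. Fcol n s a k (2*r) * alpha n s a k (2*l+1) (2*r)) {0..l}
     = rcol n s a k * ?L + ?S'"
  proof -
    have "{0..l} = insert 0 {1..l}" by auto
    have ins: "msum ?M n (\<lambda>r. Fcol n s a k (2*r) * alpha n s a k (2*l+1) (2*r)) (insert 0 {1..l})
      = Fcol n s a k (2*0) * alpha n s a k (2*l+1) (2*0) + ?S'"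
      by (rule msum_insert, simp, simp, rule mult_carrier_mat[OF Fcol_carrier alpha_carrier])
    with \<open>{0..l} = insert 0 {1..l}\<close> have "msum ?M n (\<lambda>r. Fcol n s a k (2*r) * alpha n s a k (2*l+1) (2*r)) {0..l}
      = Fcol n s a k 0 * alpha n s a k (2*l+1) 0 + ?S'"
      by simp
    thus ?thesis by (simp add: Fcol_0)
  qed
  moreover have "Gcol n s a k (2*l+1) = pcol n s a k * ?L + Gammat n s * ?G"
    using Gcol_evenS[of n s a k l] by (simp only: Suc_eq_plus1)
  ultimately show ?thesis
  proof -
    assume e1: "msum ?M n (\<lambda>r. Fcol n s a k (2*r) * alpha n s a k (2*l+1) (2*r)) {0..l}
     = rcol n s a k * ?L + ?S'" and e2: "Gcol n s a k (2*l+1) = pcol n s a k * ?L + Gammat n s * ?G"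
    have c1: "rcol n s a k * ?L \<in> carrier_mat ?M n" "pcol n s a k * ?L \<in> carrier_mat ?M n"
      "Gammat n s * ?G \<in> carrier_mat ?M n"
      by (auto intro: mult_carrier_mat[OF carriers(3) carriers(5)])
    have d: "(pcol n s a k + rcol n s a k) * ?L = pcol n s a k * ?L + rcol n s a k * ?L"
      by (rule add_mult_distrib_mat[OF carriers(4) carriers(3) carriers(5)])
    show ?thesis unfolding e1 e2 ch d
      by (rule add4[OF msum_carrier c1(3) c1(2) c1(1)])
  qed
qed


lemma step_even:
  assumes IH: "Fcol n s a (k+1) (2*l+1) =
           msum (mdim n s) n (\<lambda>r. Fcol n s a (k+1) (2*r) * alpha n s a (k+1) (2*l+1) (2*r)) {0..l}
           + Gcol n s a (k+1) (2*l+1)"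
  shows "Fcol n s a k (2*Suc l) =
           msum (mdim n s) n (\<lambda>r. Fcol n s a k (2*r-1) * alpha n s a k (2*Suc l) (2*r-1)) {1..Suc l}
           + Gcol n s a k (2*Suc l)"
proof -
  let ?Q = "Qmat n s a k" and ?M = "mdim n s"
  let ?S = "msum ?M n (\<lambda>r. Fcol n s a (k+1) (2*r) * alpha n s a (k+1) (2*l+1) (2*r)) {0..l}"
  let ?S' = "msum ?M n (\<lambda>r. Fcol n s a k (2*r-1) * alpha n s a k (2*Suc l) (2*r-1)) {1..Suc l}"
  let ?G = "Gcol n s a (k+1) (2*l+1)"
  have e: "2*Suc l = Suc (2*l+1)" by simp
  have "Fcol n s a k (2*Suc l) = ?Q * (?S + ?G)"
    unfolding e Fcol_Suc IH by (rule refl)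
  also have "\<dots> = ?Q * ?S + ?Q * ?G"
    by (rule mult_add_distrib_mat[OF carriers(1) msum_carrier Gcol_carrier])
  also have "?Q * ?S = ?S'"
  proof -
    have "?Q * ?S = msum ?M n (\<lambda>r. ?Q * (Fcol n s a (k+1) (2*r) * alpha n s a (k+1) (2*l+1) (2*r))) {0..l}"
      by (rule mult_msum[OF carriers(1)]) (simp add: mult_carrier_mat[OF Fcol_carrier alpha_carrier])
    also have "\<dots> = msum ?M n (\<lambda>r. Fcol n s a k (Suc (2*r)) * alpha n s a k (Suc (2*l+1)) (Suc (2*r))) {0..l}"
      by (rule msum_cong) (rule Q_F_alpha)
    also have "\<dots> = msum ?M n ((\<lambda>r. Fcol n s a k (2*r-1) * alpha n s a k (2*Suc l) (2*r-1)) \<circ> Suc) {0..l}"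
      by (rule msum_cong) (simp only: comp_def e[symmetric], simp)
    also have "\<dots> = ?S'"
    proof -
      have "{1..Suc l} = Suc ` {0..l}" by (simp add: image_Suc_atLeastAtMost)
      thus ?thesis by (simp only: msum_reindex[symmetric] inj_Suc inj_on_subset subset_UNIV)
    qed
    finally show ?thesis .
  qed
  also have "?Q * ?G = Gammat n s * ?G + (pcol n s a k + rcol n s a k) * lastblk n s ?G"
    by (rule Q_mult[OF Gcol_carrier])
  also have "lastblk n s ?G = 0\<^sub>m n n"
    by (rule zeroOn_last) (use Gcol_zeroOn in blast)
  also have "(pcol n s a k + rcol n s a k) * 0\<^sub>m n n = 0\<^sub>m ?M n"
    by (rule right_mult_zero_mat) (simp add: add_carrier_mat)
  also have "Gammat n s * ?G + 0\<^sub>m ?M n = Gammat n s * ?G"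
    by (rule right_add_zero_mat) simp
  also have "Gammat n s * ?G = Gcol n s a k (2*Suc l)"
    unfolding e by (rule Gcol_oddS[symmetric])
  finally show ?thesis .
qed

lemma main_ind:
  "(Fcol n s a k (2*l) =
           msum (mdim n s) n (\<lambda>r. Fcol n s a k (2*r-1) * alpha n s a k (2*l) (2*r-1)) {1..l}
           + Gcol n s a k (2*l))
       \<and> Fcol n s a k (2*l+1) =
           msum (mdim n s) n (\<lambda>r. Fcol n s a k (2*r) * alpha n s a k (2*l+1) (2*r)) {0..l}
           + Gcol n s a k (2*l+1)"
proof (induction l arbitrary: k)
  case 0
  have ev: "Fcol n s a k' (2*0) =
           msum (mdim n s) n (\<lambda>r. Fcol n s a k' (2*r-1) * alpha n s a k' (2*0) (2*r-1)) {1..0}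
           + Gcol n s a k' (2*0)" for k'
    by (simp add: Fcol_0 msum_empty)
  show ?case using ev step_odd[OF ev] by blast
next
  case (Suc l)
  have ev: "Fcol n s a k' (2*Suc l) =
           msum (mdim n s) n (\<lambda>r. Fcol n s a k' (2*r-1) * alpha n s a k' (2*Suc l) (2*r-1)) {1..Suc l}
           + Gcol n s a k' (2*Suc l)" for k'
    using step_even Suc by blast
  show ?case using ev step_odd[OF ev] by blast
qed

theorem mainTheorem6:
  fixes n s N :: nat and a :: "int \<Rightarrow> nat \<Rightarrow> 'a::comm_ring_1 mat"
  assumes "n \<ge> 1" and "s \<ge> 1" and "N \<ge> 1"
    and "\<And>k j. j \<le> 2*s \<Longrightarrow> a k j \<in> carrier_mat n n"
    and "\<And>k j. a (k + int N) j = a k j"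
  shows "Fcol n s a k (2*l) =
           msum (mdim n s) n (\<lambda>r. Fcol n s a k (2*r-1) * alpha n s a k (2*l) (2*r-1)) {1..l}
           + Gcol n s a k (2*l)
       \<and> Fcol n s a k (2*l+1) =
           msum (mdim n s) n (\<lambda>r. Fcol n s a k (2*r) * alpha n s a k (2*l+1) (2*r)) {0..l}
           + Gcol n s a k (2*l+1)"
  using main_ind by blast

end
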